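(* Let $A$ be a finite alphabet, $X\subseteq A^{\mathbb{Z}}$ a subshift, $F\colon X\to X$ a cellular automaton on $X$, and $\mu$ a Borel probability measure on $X$ which is ergodic for $\sigma$. The following are equivalent: (1) there exists a blocking word $B$ for $(X,F)$ such that $\mu([B]_0)>0$; (2) $\mu$ is equicontinuous for $(X,F)$, i.e. the set of equicontinuity points of $(X,F)$ has $\mu$-measure $1$.
   Context: $A^{\mathbb{Z}}$ has the product topology with metric $d(x,y)=2^{-i}$, $i=\min\{|j|:x_j\ne y_j\}$, and shift $\sigma((x_i)_i)=(x_{i+1})_i$. A subshift is a closed $\sigma$-invariant subset of $A^{\mathbb{Z}}$; a cellular automaton on $X$ is a continuous $F\colon X\to X$ commuting with $\sigma$; by the Curtis–Hedlund–Lyndon theorem there is an integer $r\ge 0$ (a radius) and a local map $f$ with $F(x)_i=f(x_{i-r},\dots,x_{i+r})$. For $x\in A^{\mathbb{Z}}$ and $p\le q$, $x(p,q)=x_p\cdots x_q$; for a word $u=u_1\cdots u_{|u|}$ and $t\in\mathbb{Z}$, $[u]_t=\{x\in X: x_{t+j-1}=u_j,\ 1\le j\le |u|\}$. A word $B\in A^{2k+1}$ is a blocking word for $(X,F)$ if there exist an integer $i$ with $2i+1\ge r$ and words $v_n$ of length $2i+1$ ($n\ge 1$) such that for every $x\in X$ with $x(-k,k)=B$ one has $F^n(x)(-i,i)=v_n$ for all $n\ge1$. A point $x\in X$ is an equicontinuity point of $(X,F)$ if for every $\varepsilon>0$ there is $\eta>0$ such that $d(x,y)\le\eta$ implies $d(F^i(x),F^i(y))\le\varepsilon$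 for all $i>0$. *)

theory Defs
  imports "HOL-Analysis.Analysis" "HOL-Probability.Probability"
begin

definition fullshift_top :: "(int \<Rightarrow> 'a) topology" where
  "fullshift_top = product_topology (\<lambda>_. discrete_topology UNIV) UNIV"

definition shift :: "(int \<Rightarrow> 'a) \<Rightarrow> (int \<Rightarrow> 'a)" where
  "shift x = (\<lambda>i. x (i + 1))"

definition cdist :: "(int \<Rightarrow> 'a) \<Rightarrow> (int \<Rightarrow> 'a) \<Rightarrow> real" where
  "cdist x y = (if x = y then 0
     else (1/2) ^ (LEAST n::nat. \<exists>j. \<bar>j\<bar> = int n \<and> x j \<noteq> y j))"

definition subshift :: "(int \<Rightarrow> 'a::finite) set \<Rightarrow> bool" where
  "subshift X \<longleftrightarrow> closedin fullshift_top X \<and> shift ` X = X"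

definition cellular_automaton :: "(int \<Rightarrow> 'a::finite) set \<Rightarrow> ((int \<Rightarrow> 'a) \<Rightarrow> (int \<Rightarrow> 'a)) \<Rightarrow> bool" where
  "cellular_automaton X F \<longleftrightarrow>
     continuous_map (subtopology fullshift_top X) (subtopology fullshift_top X) F \<and>
     (\<forall>x\<in>X. F (shift x) = shift (F x))"

definition is_radius :: "(int \<Rightarrow> 'a) set \<Rightarrow> ((int \<Rightarrow> 'a) \<Rightarrow> (int \<Rightarrow> 'a)) \<Rightarrow> nat \<Rightarrow> bool" where
  "is_radius X F r \<longleftrightarrow> (\<exists>f :: 'a list \<Rightarrow> 'a. \<forall>x\<in>X. \<forall>i.
      F x i = f (map (\<lambda>m. x (i + m)) [- int r..int r]))"

definition cylinder :: "(int \<Rightarrow> 'a) set \<Rightarrow> 'a list \<Rightarrow> int \<Rightarrow> (int \<Rightarrow> 'a) set" where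
  "cylinder X u t = {x \<in> X. \<forall>j < length u. x (t + int j) = u ! j}"

definition window :: "(int \<Rightarrow> 'a) \<Rightarrow> int \<Rightarrow> int \<Rightarrow> 'a list" where
  "window x p q = map x [p..q]"

definition blocking_word :: "(int \<Rightarrow> 'a) set \<Rightarrow> ((int \<Rightarrow> 'a) \<Rightarrow> (int \<Rightarrow> 'a)) \<Rightarrow> 'a list \<Rightarrow> bool" where
  "blocking_word X F B \<longleftrightarrow> (\<exists>k::nat. length B = 2 * k + 1 \<and>
     (\<exists>r. is_radius X F r \<and> (\<exists>i::nat. 2 * i + 1 \<ge> r \<and>
       (\<exists>v :: nat \<Rightarrow> 'a list. (\<forall>n\<ge>1. length (v n) = 2 * i + 1) \<and>
         (\<forall>x\<in>X. window x (- int k) (int k) = B \<longrightarrow>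
            (\<forall>n\<ge>1. window ((F ^^ n) x) (- int i) (int i) = v n))))))"

definition equicontinuity_point :: "(int \<Rightarrow> 'a) set \<Rightarrow> ((int \<Rightarrow> 'a) \<Rightarrow> (int \<Rightarrow> 'a)) \<Rightarrow> (int \<Rightarrow> 'a) \<Rightarrow> bool" where
  "equicontinuity_point X F x \<longleftrightarrow> x \<in> X \<and>
     (\<forall>\<epsilon>>0. \<exists>\<eta>>0. \<forall>y\<in>X. cdist x y \<le> \<eta> \<longrightarrow>
        (\<forall>i>0. cdist ((F ^^ i) x) ((F ^^ i) y) \<le> \<epsilon>))"

definition borel_on :: "(int \<Rightarrow> 'a) set \<Rightarrow> (int \<Rightarrow> 'a) measure" where
  "borel_on X = sigma X {U. openin (subtopology fullshift_top X) U}"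

definition shift_ergodic :: "(int \<Rightarrow> 'a) set \<Rightarrow> (int \<Rightarrow> 'a) measure \<Rightarrow> bool" where
  "shift_ergodic X M \<longleftrightarrow>
     (\<forall>A\<in>sets M. shift -` A \<inter> X \<in> sets M \<and> emeasure M (shift -` A \<inter> X) = emeasure M A) \<and>
     (\<forall>A\<in>sets M. shift -` A \<inter> X = A \<longrightarrow> emeasure M A = 0 \<or> emeasure M A = 1)"

end

theory Submission
  imports Defs
begin


definition sh :: "int \<Rightarrow> (int \<Rightarrow> 'a) \<Rightarrow> (int \<Rightarrow> 'a)" where "sh p x = (\<lambda>j. x (j + p))"
definition ush :: "(int \<Rightarrow> 'a) \<Rightarrow> (int \<Rightarrow> 'a)" where "ush x = (\<lambda>j. x (j - 1))"
definition agree :: "nat \<Rightarrow> (int \<Rightarrow> 'a) \<Rightarrow> (int \<Rightarrow> 'a) \<Rightarrow> bool" where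
  "agree k x y \<longleftrightarrow> (\<forall>j. \<bar>j\<bar> \<le> int k \<longrightarrow> x j = y j)"

lemma topspace_fs[simp]: "topspace fullshift_top = UNIV"
  by (simp add: fullshift_top_def)

lemma subshift_shift: "subshift X \<Longrightarrow> x \<in> X \<Longrightarrow> shift x \<in> X"
  unfolding subshift_def by blast

lemma subshift_ush: assumes "subshift X" "x \<in> X" shows "ush x \<in> X"
proof -
  have "x \<in> shift ` X" using assms unfolding subshift_def by blast
  then obtain z where z: "z \<in> X" "x = shift z" by blast
  have "z = ush x" using z(2) by (auto simp: ush_def shift_def)
  then show ?thesis using z by simp
qed

lemma sh_in: assumes "subshift X" "x \<in> X" shows "sh p x \<in> X"
proof (induction p rule: int_induct[where k=0])
  case base then show ?case using assms by (simp add: sh_def)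
next
  case (step1 i)
  have "sh (i+1) x = shift (sh i x)" by (auto simp: sh_def shift_def algebra_simps)
  then show ?case using step1 subshift_shift[OF assms(1)] by simp
next
  case (step2 i)
  have "sh (i-1) x = ush (sh i x)" by (auto simp: sh_def ush_def algebra_simps)
  then show ?case using step2 subshift_ush[OF assms(1)] by simp
qed

lemma ca_maps: assumes "cellular_automaton X F" "x \<in> X" shows "F x \<in> X"
proof -
  have "continuous_map (subtopology fullshift_top X) (subtopology fullshift_top X) F"
    using assms unfolding cellular_automaton_def by blast
  then have "F ` topspace (subtopology fullshift_top X) \<subseteq> topspace (subtopology fullshift_top X)"
    by (rule continuous_map_image_subset_topspace)
  then show ?thesis using assms(2) by auto
qed

lemma ca_iter_maps: assumes "cellular_automaton X F" "x \<in> X" shows "(F ^^ n) x \<in> X"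
  by (induction n) (auto simp: assms ca_maps[OF assms(1)])

lemma ca_ush: assumes "cellular_automaton X F" "subshift X" "x \<in> X" shows "F (ush x) = ush (F x)"
proof -
  have u: "ush x \<in> X" using subshift_ush assms by blast
  have "shift (ush x) = x" by (auto simp: ush_def shift_def)
  then have "F x = shift (F (ush x))" using assms(1) u unfolding cellular_automaton_def by metis
  then show ?thesis by (auto simp: ush_def shift_def)
qed

lemma ca_sh: assumes "cellular_automaton X F" "subshift X" "x \<in> X" shows "F (sh p x) = sh p (F x)"
proof (induction p rule: int_induct[where k=0])
  case base then show ?case by (simp add: sh_def)
next
  case (step1 i)
  have e: "\<And>z. sh (i+1) z = shift (sh i z)" by (auto simp: sh_def shift_def algebra_simps)
  have "sh i x \<in> X" using sh_in assms by blast
  then show ?case using step1 e assms(1) unfolding cellular_automaton_def by metis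
next
  case (step2 i)
  have e: "\<And>z. sh (i-1) z = ush (sh i z)" by (auto simp: sh_def ush_def algebra_simps)
  have "sh i x \<in> X" using sh_in assms by blast
  then show ?case using step2 e ca_ush[OF assms(1,2)] by metis
qed

lemma ca_iter_sh: assumes "cellular_automaton X F" "subshift X" "x \<in> X"
  shows "(F ^^ n) (sh p x) = sh p ((F ^^ n) x)"
proof (induction n)
  case 0 then show ?case by simp
next
  case (Suc n)
  have "(F ^^ n) x \<in> X" using ca_iter_maps assms by blast
  then show ?case using Suc ca_sh[OF assms(1,2)] by simp
qed

lemma cyl_open: "openin fullshift_top {y. agree k x y}"
proof -
  have eq: "{y. agree k x y} = PiE UNIV (\<lambda>j. if \<bar>j\<bar> \<le> int k then {x j} else UNIV)"
    by (auto simp: agree_def PiE_def Pi_def split: if_splits)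
  have fin: "finite {j \<in> UNIV. (if \<bar>j\<bar> \<le> int k then {x j} else UNIV) \<noteq> topspace (discrete_topology UNIV)}"
    by (rule finite_subset[of _ "{- int k..int k}"]) (auto split: if_splits)
  show ?thesis unfolding eq fullshift_top_def
    by (subst openin_PiE_gen) (use fin in auto)
qed

lemma agree_trans: "agree k x y \<Longrightarrow> agree k y z \<Longrightarrow> agree k x z"
  by (auto simp: agree_def)
lemma agree_sym: "agree k x y \<Longrightarrow> agree k y x"
  by (auto simp: agree_def)
lemma agree_mono: "agree k x y \<Longrightarrow> m \<le> k \<Longrightarrow> agree m x y"
  by (auto simp: agree_def)

lemma loc_open: assumes "S \<subseteq> X" "\<forall>x\<in>S. \<forall>y\<in>X. agree K x y \<longrightarrow> y \<in> S"
  shows "openin (subtopology fullshift_top X) S"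
proof -
  let ?T = "\<Union>x\<in>S. {y. agree K x y}"
  have "openin fullshift_top ?T" using cyl_open by blast
  moreover have "S = ?T \<inter> X"
  proof
    show "S \<subseteq> ?T \<inter> X" using assms(1) by (auto simp: agree_def)
    show "?T \<inter> X \<subseteq> S" using assms(2) by blast
  qed
  ultimately show ?thesis by (auto simp: openin_subtopology)
qed

lemma open_sets: assumes "sets M = sets (borel_on X)" "openin (subtopology fullshift_top X) U"
  shows "U \<in> sets M"
proof -
  have sub: "{U. openin (subtopology fullshift_top X) U} \<subseteq> Pow X"
  proof
    fix V assume "V \<in> {U. openin (subtopology fullshift_top X) U}"
    then have "V \<subseteq> topspace (subtopology fullshift_top X)" using openin_subset by blast
    then show "V \<in> Pow X" by auto
  qed
  show ?thesis unfolding assms(1) borel_on_def sets_measure_of[OF sub]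
    using assms(2) by (auto intro: sigma_sets.Basic)
qed

lemma cdist_le: assumes "agree m x y" shows "cdist x y \<le> (1/2)^(m+1)"
proof (cases "x = y")
  case True then show ?thesis by (simp add: cdist_def)
next
  case False
  then obtain j where j: "x j \<noteq> y j" by auto
  have ex: "\<exists>n::nat. \<exists>j. \<bar>j\<bar> = int n \<and> x j \<noteq> y j"
    using j by (intro exI[of _ "nat \<bar>j\<bar>"]) auto
  let ?L = "LEAST n::nat. \<exists>j. \<bar>j\<bar> = int n \<and> x j \<noteq> y j"
  from LeastI_ex[OF ex] obtain j' where j': "\<bar>j'\<bar> = int ?L" "x j' \<noteq> y j'" by blast
  have "?L \<ge> m + 1" using assms j' unfolding agree_def by force
  then have "((1::real)/2) ^ ?L \<le> (1/2)^(m+1)" by (intro power_decreasing) auto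
  then show ?thesis using False by (simp add: cdist_def)
qed

lemma cdist_ge: assumes "cdist x y \<le> (1/2)^(m+1)" shows "agree m x y"
proof (rule ccontr)
  assume "\<not> agree m x y"
  then obtain j where j: "\<bar>j\<bar> \<le> int m" "x j \<noteq> y j" by (auto simp: agree_def)
  then have ne: "x \<noteq> y" by auto
  let ?L = "LEAST n::nat. \<exists>j. \<bar>j\<bar> = int n \<and> x j \<noteq> y j"
  have "?L \<le> nat \<bar>j\<bar>" using j by (intro Least_le) auto
  then have "?L \<le> m" using j by auto
  then have "((1::real)/2) ^ m \<le> (1/2)^?L" by (intro power_decreasing) auto
  moreover have "((1::real)/2)^(m+1) < (1/2)^m" by simp
  moreover have "cdist x y = (1/2)^?L" using ne by (simp add: cdist_def)
  ultimately show False using assms by linarith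
qed

lemma eq_char: "equicontinuity_point X F x \<longleftrightarrow> x \<in> X \<and>
   (\<forall>m. \<exists>k. \<forall>y\<in>X. agree k x y \<longrightarrow> (\<forall>n>0. agree m ((F^^n) x) ((F^^n) y)))"
proof
  assume h: "equicontinuity_point X F x"
  show "x \<in> X \<and> (\<forall>m. \<exists>k. \<forall>y\<in>X. agree k x y \<longrightarrow> (\<forall>n>0. agree m ((F^^n) x) ((F^^n) y)))"
  proof (intro conjI allI)
    show "x \<in> X" using h by (simp add: equicontinuity_point_def)
    fix m
    have "((1::real)/2)^(m+1) > 0" by simp
    then obtain \<eta> where eta: "\<eta> > 0" "\<forall>y\<in>X. cdist x y \<le> \<eta> \<longrightarrow>
        (\<forall>i>0. cdist ((F ^^ i) x) ((F ^^ i) y) \<le> (1/2)^(m+1))"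
      using h unfolding equicontinuity_point_def by blast
    obtain k where k: "((1::real)/2)^k < \<eta>" using real_arch_pow_inv[OF eta(1), of "1/2"] by auto
    show "\<exists>k. \<forall>y\<in>X. agree k x y \<longrightarrow> (\<forall>n>0. agree m ((F^^n) x) ((F^^n) y))"
    proof (intro exI[of _ k] ballI impI allI)
      fix y n assume y: "y \<in> X" "agree k x y" and n: "0 < (n::nat)"
      have "cdist x y \<le> (1/2)^(k+1)" by (rule cdist_le[OF y(2)])
      also have "\<dots> \<le> (1/2)^k" by (intro power_decreasing) auto
      finally have "cdist x y \<le> \<eta>" using k by linarith
      then show "agree m ((F^^n) x) ((F^^n) y)" using eta y n by (intro cdist_ge) blast
    qed
  qed
next
  assume h: "x \<in> X \<and> (\<forall>m. \<exists>k. \<forall>y\<in>X. agree k x y \<longrightarrow> (\<forall>n>0. agree m ((F^^n) x) ((F^^n) y)))"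
  show "equicontinuity_point X F x" unfolding equicontinuity_point_def
  proof (intro conjI allI impI)
    show "x \<in> X" using h by simp
    fix \<epsilon> :: real assume e: "\<epsilon> > 0"
    obtain m where m: "((1::real)/2)^m < \<epsilon>" using real_arch_pow_inv[OF e, of "1/2"] by auto
    obtain k where k: "\<forall>y\<in>X. agree k x y \<longrightarrow> (\<forall>n>0. agree m ((F^^n) x) ((F^^n) y))" using h by blast
    show "\<exists>\<eta>>0. \<forall>y\<in>X. cdist x y \<le> \<eta> \<longrightarrow> (\<forall>i>0. cdist ((F ^^ i) x) ((F ^^ i) y) \<le> \<epsilon>)"
    proof (intro exI[of _ "(1/2)^(k+1)"] conjI ballI impI allI)
      fix y i assume y: "y \<in> X" "cdist x y \<le> (1/2)^(k+1)" and i: "0 < (i::nat)"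
      have "agree m ((F^^i) x) ((F^^i) y)" using k y i cdist_ge by blast
      then have "cdist ((F ^^ i) x) ((F ^^ i) y) \<le> (1/2)^(m+1)" by (rule cdist_le)
      also have "\<dots> \<le> (1/2)^m" by (intro power_decreasing) auto
      finally show "cdist ((F ^^ i) x) ((F ^^ i) y) \<le> \<epsilon>" using m by linarith
    qed simp
  qed
qed


lemma window_agree: "window x (- int k) (int k) = window y (- int k) (int k) \<longleftrightarrow> agree k x y"
  by (auto simp: window_def agree_def map_eq_conv abs_le_iff)

lemma E_sets: assumes "sets M = sets (borel_on X)" "cellular_automaton X F"
  shows "{x. equicontinuity_point X F x} \<in> sets M"
proof -
  define Om where "Om m k = {x\<in>X. \<forall>y\<in>X. agree k x y \<longrightarrow> (\<forall>n>0. agree m ((F^^n) x) ((F^^n) y))}"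
    for m k :: nat
  have eq: "{x. equicontinuity_point X F x} = (\<Inter>m. \<Union>k. Om m k)"
    unfolding eq_char Om_def by blast
  have "Om m k \<in> sets M" for m k
  proof (rule open_sets[OF assms(1)], rule loc_open[where K=k])
    show "Om m k \<subseteq> X" by (auto simp: Om_def)
    show "\<forall>x\<in>Om m k. \<forall>y\<in>X. agree k x y \<longrightarrow> y \<in> Om m k"
    proof (intro ballI impI)
      fix x z assume x: "x \<in> Om m k" and z: "z \<in> X" "agree k x z"
      have "agree m ((F^^n) z) ((F^^n) y)" if y: "y \<in> X" "agree k z y" "n > 0" for y n
      proof -
        have "agree k x y" using agree_trans z y by blast
        then have a1: "agree m ((F^^n) x) ((F^^n) y)" using x y unfolding Om_def by blast
        have a2: "agree m ((F^^n) x) ((F^^n) z)" using x z y unfolding Om_def by blast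
        show ?thesis using agree_trans[OF agree_sym[OF a2] a1] .
      qed
      then show "z \<in> Om m k" using z unfolding Om_def by blast
    qed
  qed
  then show ?thesis unfolding eq by (intro sets.countable_INT sets.countable_nat_UN) auto
qed

lemma chl_point: assumes "cellular_automaton X F" "x \<in> X"
  shows "\<exists>k. \<forall>y\<in>X. agree k x y \<longrightarrow> F y 0 = F x 0"
proof -
  have c1: "continuous_map (subtopology fullshift_top X) fullshift_top F"
    using assms(1) unfolding cellular_automaton_def continuous_map_in_subtopology by blast
  have c2: "continuous_map (subtopology fullshift_top X) (discrete_topology UNIV) (\<lambda>z. F z 0)"
  proof -
    have p: "continuous_map (fullshift_top :: (int \<Rightarrow> 'a) topology) (discrete_topology UNIV) (\<lambda>x. x 0)"
      unfolding fullshift_top_def by (rule continuous_map_product_projection) simp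
    show ?thesis using continuous_map_compose[OF c1 p] by (simp add: o_def)
  qed
  have "openin (subtopology fullshift_top X) {z \<in> topspace (subtopology fullshift_top X). F z 0 \<in> {F x 0}}"
    by (rule openin_continuous_map_preimage[OF c2]) simp
  then obtain T where T: "openin fullshift_top T" "{z \<in> X. F z 0 = F x 0} = T \<inter> X"
    by (auto simp: openin_subtopology)
  have "x \<in> T" using T(2) assms(2) by blast
  then obtain U where U: "finite {i \<in> UNIV. U i \<noteq> topspace (discrete_topology UNIV)}"
      "x \<in> PiE UNIV U" "PiE UNIV U \<subseteq> T"
    using T(1) unfolding fullshift_top_def openin_product_topology_alt by blast
  define J where "J = {i. U i \<noteq> UNIV}"
  have fJ: "finite J" using U(1) by (simp add: J_def)
  define k where "k = nat (\<Sum>j\<in>J. \<bar>j\<bar>)"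
  have k: "\<bar>j\<bar> \<le> int k" if "j \<in> J" for j
  proof -
    have "\<bar>j\<bar> \<le> (\<Sum>j\<in>J. \<bar>j\<bar>)" using fJ that by (intro member_le_sum) auto
    then show ?thesis unfolding k_def by simp
  qed
  show ?thesis
  proof (intro exI[of _ k] ballI impI)
    fix y assume y: "y \<in> X" "agree k x y"
    have "y \<in> PiE UNIV U"
    proof -
      have "y j \<in> U j" for j
      proof (cases "j \<in> J")
        case True
        then have "y j = x j" using k y(2) unfolding agree_def by auto
        then show ?thesis using U(2) by auto
      next
        case False then show ?thesis by (auto simp: J_def)
      qed
      then show ?thesis by auto
    qed
    then have "y \<in> T" using U(3) by blast
    then show "F y 0 = F x 0" using T(2) y(1) by blast
  qed
qed

lemma chl_unif: assumes "subshift X" "cellular_automaton X F"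
  shows "\<exists>R. \<forall>x\<in>X. \<forall>y\<in>X. agree R x y \<longrightarrow> F y 0 = F x 0"
proof -
  have cs: "compact_space (fullshift_top :: (int \<Rightarrow> 'a) topology)"
    unfolding fullshift_top_def by (simp add: compact_space_product_topology compact_space_discrete_topology)
  have comp: "compactin fullshift_top X"
    using assms(1) unfolding subshift_def by (intro closedin_compact_space[OF cs]) simp
  have "\<forall>x\<in>X. \<exists>k. \<forall>y\<in>X. agree k x y \<longrightarrow> F y 0 = F x 0"
    using chl_point[OF assms(2)] by blast
  then obtain kf where kf: "\<forall>x\<in>X. \<forall>y\<in>X. agree (kf x) x y \<longrightarrow> F y 0 = F x 0"
    by (rule bchoice[THEN exE])
  define cyl where "cyl x = {y. agree (kf x) x y}" for x
  have "\<exists>\<F>. finite \<F> \<and> \<F> \<subseteq> cyl ` X \<and> X \<subseteq> \<Union>\<F>"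
  proof -
    have "\<forall>B\<in>cyl ` X. openin fullshift_top B" using cyl_open by (auto simp: cyl_def)
    moreover have "X \<subseteq> \<Union>(cyl ` X)" by (auto simp: cyl_def agree_def)
    moreover have "(\<forall>B\<in>cyl ` X. openin fullshift_top B) \<and> X \<subseteq> \<Union>(cyl ` X) \<longrightarrow>
        (\<exists>\<F>. finite \<F> \<and> \<F> \<subseteq> cyl ` X \<and> X \<subseteq> \<Union>\<F>)"
      using comp unfolding compactin_def by (rule conjunct2[THEN spec])
    ultimately show ?thesis by blast
  qed
  then obtain \<F> where Fs: "finite \<F>" "\<F> \<subseteq> cyl ` X" "X \<subseteq> \<Union>\<F>" by blast
  obtain C where C: "C \<subseteq> X" "finite C" "\<F> = cyl ` C" using finite_subset_image[OF Fs(1,2)] by blast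
  define R where "R = Max (insert 0 (kf ` C))"
  show ?thesis
  proof (intro exI[of _ R] ballI impI)
    fix x y assume xy: "x \<in> X" "y \<in> X" "agree R x y"
    obtain c where c: "c \<in> C" "x \<in> cyl c" using Fs(3) C(3) xy(1) by blast
    have "kf c \<le> R" unfolding R_def using C(2) c(1) by (intro Max_ge) auto
    then have a: "agree (kf c) x y" using xy(3) agree_mono by blast
    have b: "agree (kf c) c x" using c(2) by (simp add: cyl_def)
    have kc: "\<forall>y\<in>X. agree (kf c) c y \<longrightarrow> F y 0 = F c 0" using kf C(1) c(1) by blast
    have "F x 0 = F c 0" using kc xy(1) b by blast
    moreover have "F y 0 = F c 0" using kc xy(2) agree_trans[OF b a] by blast
    ultimately show "F y 0 = F x 0" by simp
  qed
qed

lemma chl: assumes "subshift X" "cellular_automaton X F" shows "\<exists>r. is_radius X F r"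
proof -
  obtain R where R: "\<forall>x\<in>X. \<forall>y\<in>X. agree R x y \<longrightarrow> F y 0 = F x 0"
    using chl_unif[OF assms] by blast
  define f where "f w = F (SOME z. z \<in> X \<and> window z (- int R) (int R) = w) 0" for w
  show ?thesis unfolding is_radius_def
  proof (intro exI[of _ R] exI[of _ f] ballI allI)
    fix x i assume x: "x \<in> X"
    let ?w = "map (\<lambda>m. x (i + m)) [- int R..int R]"
    have w: "window (sh i x) (-int R) (int R) = ?w" by (simp add: window_def sh_def add.commute)
    have s: "sh i x \<in> X" using sh_in assms(1) x by blast
    let ?z = "SOME z. z \<in> X \<and> window z (- int R) (int R) = ?w"
    have z: "?z \<in> X \<and> window ?z (- int R) (int R) = ?w"
      using someI[of "\<lambda>z. z \<in> X \<and> window z (- int R) (int R) = ?w" "sh i x"] s w by blast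
    have "agree R (sh i x) ?z" using window_agree[of "sh i x" R ?z] z w by simp
    then have "F ?z 0 = F (sh i x) 0" using R s z by blast
    also have "F (sh i x) 0 = F x i" using ca_sh[OF assms(2,1) x] by (simp add: sh_def)
    finally show "F x i = f ?w" by (simp add: f_def)
  qed
qed




definition occ :: "(int \<Rightarrow> 'a) set \<Rightarrow> 'a list \<Rightarrow> nat \<Rightarrow> int \<Rightarrow> (int \<Rightarrow> 'a) set" where
  "occ X B k p = {x\<in>X. window (sh p x) (- int k) (int k) = B}"

lemma occ_open: "openin (subtopology fullshift_top X) (occ X B k p)"
proof (rule loc_open[where K="nat \<bar>p\<bar> + k"])
  show "occ X B k p \<subseteq> X" by (auto simp: occ_def)
  show "\<forall>x\<in>occ X B k p. \<forall>y\<in>X. agree (nat \<bar>p\<bar> + k) x y \<longrightarrow> y \<in> occ X B k p"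
  proof (intro ballI impI)
    fix x y assume x: "x \<in> occ X B k p" and y: "y \<in> X" "agree (nat \<bar>p\<bar> + k) x y"
    have "agree k (sh p x) (sh p y)" using y(2) unfolding agree_def sh_def by auto
    then have "window (sh p y) (- int k) (int k) = window (sh p x) (- int k) (int k)"
      using window_agree by metis
    then show "y \<in> occ X B k p" using x y by (simp add: occ_def)
  qed
qed

lemma occ_shift: assumes "subshift X" "x \<in> X"
  shows "shift x \<in> occ X B k p \<longleftrightarrow> x \<in> occ X B k (p+1)"
proof -
  have "sh p (shift x) = sh (p+1) x" by (auto simp: sh_def shift_def algebra_simps)
  then show ?thesis using subshift_shift[OF assms] assms(2) by (simp add: occ_def)
qed

lemma occ_shift_set: assumes "subshift X"
  shows "shift -` occ X B k p \<inter> X = occ X B k (p+1)"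
  using occ_shift[OF assms] by (auto simp: occ_def)

lemma cyl_occ: assumes "length B = 2*k+1"
  shows "cylinder X B 0 = occ X B k (int k)"
proof -
  have "window (sh (int k) x) (- int k) (int k) = B \<longleftrightarrow> (\<forall>j<length B. x (int j) = B ! j)" for x
  proof -
    have len: "length (window (sh (int k) x) (- int k) (int k)) = length B"
      using assms by (simp add: window_def)
    have nth: "window (sh (int k) x) (- int k) (int k) ! n = x (int n)" if "n < length B" for n
    proof -
      have "[- int k..int k] ! n = - int k + int n" using that assms by (intro nth_upto) auto
      moreover have "n < length [- int k..int k]" using that assms by simp
      ultimately show ?thesis by (simp add: window_def sh_def)
    qed
    show ?thesis using len nth by (auto simp: list_eq_iff_nth_eq)
  qed
  then show ?thesis by (auto simp: cylinder_def occ_def)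
qed

lemma border: assumes "subshift X" "cellular_automaton X F"
    and blk: "\<forall>z\<in>X. window z (- int k) (int k) = B \<longrightarrow> (\<forall>n\<ge>1. window ((F ^^ n) z) (- int i) (int i) = v n)"
    and x: "x \<in> occ X B k p" and y: "y \<in> occ X B k p" and n: "n \<ge> 1" and j: "\<bar>j - p\<bar> \<le> int i"
  shows "(F ^^ n) x j = (F ^^ n) y j"
proof -
  have xX: "x \<in> X" and yX: "y \<in> X" using x y by (auto simp: occ_def)
  have "window ((F ^^ n) (sh p x)) (- int i) (int i) = v n"
    using blk sh_in[OF assms(1) xX] x n by (auto simp: occ_def)
  moreover have "window ((F ^^ n) (sh p y)) (- int i) (int i) = v n"
    using blk sh_in[OF assms(1) yX] y n by (auto simp: occ_def)
  ultimately have "window (sh p ((F ^^ n) x)) (- int i) (int i) = window (sh p ((F ^^ n) y)) (- int i) (int i)"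
    using ca_iter_sh[OF assms(2,1) xX] ca_iter_sh[OF assms(2,1) yX] by simp
  then have "agree i (sh p ((F ^^ n) x)) (sh p ((F ^^ n) y))" using window_agree by metis
  then have "sh p ((F ^^ n) x) (j - p) = sh p ((F ^^ n) y) (j - p)" using j unfolding agree_def by blast
  then show ?thesis by (simp add: sh_def)
qed

lemma propagate: assumes ss: "subshift X" and ca: "cellular_automaton X F"
    and rad: "\<forall>x\<in>X. \<forall>j. F x j = f (map (\<lambda>m. x (j + m)) [- int r..int r])"
    and ri: "2 * i + 1 \<ge> r"
    and blk: "\<forall>z\<in>X. window z (- int k) (int k) = B \<longrightarrow> (\<forall>n\<ge>1. window ((F ^^ n) z) (- int i) (int i) = v n)"
    and xp: "x \<in> occ X B k p" and xq: "x \<in> occ X B k q" and qp: "q \<le> p"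
    and yX: "y \<in> X"
    and agr: "\<forall>j. q - int (max i k) \<le> j \<and> j \<le> p + int (max i k) \<longrightarrow> x j = y j"
  shows "q - int i \<le> j \<and> j \<le> p + int i \<longrightarrow> (F ^^ n) x j = (F ^^ n) y j"
proof -
  have xX: "x \<in> X" using xp by (auto simp: occ_def)
  have yocc: "y \<in> occ X B k s" if "x \<in> occ X B k s" "q \<le> s" "s \<le> p" for s
  proof -
    have "agree k (sh s x) (sh s y)" unfolding agree_def sh_def
    proof (intro allI impI)
      fix j assume "\<bar>j\<bar> \<le> int k"
      moreover have "int k \<le> int (max i k)" by simp
      ultimately have "q - int (max i k) \<le> j + s \<and> j + s \<le> p + int (max i k)"
        using that by (auto simp: abs_le_iff)
      then show "x (j + s) = y (j + s)" using agr by blast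
    qed
    then have "window (sh s y) (- int k) (int k) = window (sh s x) (- int k) (int k)"
      using window_agree by metis
    then show ?thesis using that yX by (simp add: occ_def)
  qed
  have yp: "y \<in> occ X B k p" using yocc xp qp by simp
  have yq: "y \<in> occ X B k q" using yocc xq qp by simp
  show ?thesis
  proof (induction n arbitrary: j)
    case 0
    have "int i \<le> int (max i k)" by simp
    show ?case
    proof
      assume "q - int i \<le> j \<and> j \<le> p + int i"
      then have "q - int (max i k) \<le> j \<and> j \<le> p + int (max i k)" using \<open>int i \<le> int (max i k)\<close> by linarith
      then show "(F ^^ 0) x j = (F ^^ 0) y j" using agr by simp
    qed
  next
    case (Suc n)
    show ?case
    proof
      assume j: "q - int i \<le> j \<and> j \<le> p + int i"
      consider "\<bar>j - p\<bar> \<le> int i" | "\<bar>j - q\<bar> \<le> int i" | "q + int i < j \<and> j < p - int i" using j by linarith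
      then show "(F ^^ Suc n) x j = (F ^^ Suc n) y j"
      proof cases
        case 1 show ?thesis using border[OF ss ca blk xp yp _ 1, of "Suc n"] by simp
      next
        case 2 show ?thesis using border[OF ss ca blk xq yq _ 2, of "Suc n"] by simp
      next
        case 3
        have m: "map (\<lambda>m. (F ^^ n) x (j + m)) [- int r..int r] = map (\<lambda>m. (F ^^ n) y (j + m)) [- int r..int r]"
          unfolding map_eq_conv
        proof
          fix m assume "m \<in> set [- int r..int r]"
          then have "- int r \<le> m" "m \<le> int r" by auto
          then have "q - int i \<le> j + m \<and> j + m \<le> p + int i" using 3 ri by linarith
          then show "(F ^^ n) x (j + m) = (F ^^ n) y (j + m)" using Suc.IH by blast
        qed
        have "(F ^^ Suc n) x j = f (map (\<lambda>m. (F ^^ n) x (j + m)) [- int r..int r])"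
          using rad ca_iter_maps[OF ca xX, of n] by simp
        also have "\<dots> = f (map (\<lambda>m. (F ^^ n) y (j + m)) [- int r..int r])" by (rule arg_cong[OF m])
        also have "\<dots> = (F ^^ Suc n) y j"
          using rad ca_iter_maps[OF ca yX, of n] by simp
        finally show ?thesis .
      qed
    qed
  qed
qed


lemma equi_from_occ: assumes ss: "subshift X" and ca: "cellular_automaton X F"
    and rad: "\<forall>x\<in>X. \<forall>j. F x j = f (map (\<lambda>m. x (j + m)) [- int r..int r])"
    and ri: "2 * i + 1 \<ge> r"
    and blk: "\<forall>z\<in>X. window z (- int k) (int k) = B \<longrightarrow> (\<forall>n\<ge>1. window ((F ^^ n) z) (- int i) (int i) = v n)"
    and xX: "x \<in> X"
    and pos: "\<forall>N::nat. \<exists>p\<ge>int N. x \<in> occ X B k p"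
    and neg: "\<forall>N::nat. \<exists>q\<le>- int N. x \<in> occ X B k q"
  shows "equicontinuity_point X F x"
  unfolding eq_char
proof (intro conjI allI)
  show "x \<in> X" by fact
  fix m :: nat
  obtain p where p: "p \<ge> int m" "x \<in> occ X B k p" using pos by blast
  obtain q where q: "q \<le> - int m" "x \<in> occ X B k q" using neg by blast
  define kk where "kk = nat (max p (-q)) + max i k"
  show "\<exists>kk. \<forall>y\<in>X. agree kk x y \<longrightarrow> (\<forall>n>0. agree m ((F ^^ n) x) ((F ^^ n) y))"
  proof (intro exI[of _ kk] ballI impI allI)
    fix y n assume y: "y \<in> X" "agree kk x y" and n: "0 < (n::nat)"
    have agr: "\<forall>j. q - int (max i k) \<le> j \<and> j \<le> p + int (max i k) \<longrightarrow> x j = y j"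
    proof (intro allI impI)
      fix j assume "q - int (max i k) \<le> j \<and> j \<le> p + int (max i k)"
      then have "\<bar>j\<bar> \<le> int kk" unfolding kk_def using p q by (auto simp: abs_le_iff)
      then show "x j = y j" using y(2) unfolding agree_def by blast
    qed
    show "agree m ((F ^^ n) x) ((F ^^ n) y)" unfolding agree_def
    proof (intro allI impI)
      fix j assume "\<bar>j\<bar> \<le> int m"
      then have "q - int i \<le> j \<and> j \<le> p + int i" using p q by (auto simp: abs_le_iff)
      then show "(F ^^ n) x j = (F ^^ n) y j"
        using propagate[OF ss ca rad ri blk p(2) q(2) _ y(1) agr] p q by simp
    qed
  qed
qed

lemma equi_to_block: assumes ss: "subshift X" and ca: "cellular_automaton X F"
    and e: "equicontinuity_point X F x"
  shows "\<exists>k. blocking_word X F (window x (- int k) (int k)) \<and> x \<in> occ X (window x (- int k) (int k)) k 0"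
proof -
  obtain r where r: "is_radius X F r" using chl[OF ss ca] by blast
  obtain kk where kk: "\<forall>y\<in>X. agree kk x y \<longrightarrow> (\<forall>n>0. agree r ((F^^n) x) ((F^^n) y))"
    using e unfolding eq_char by blast
  have xX: "x \<in> X" using e by (simp add: equicontinuity_point_def)
  define B where "B = window x (- int kk) (int kk)"
  define v where "v n = window ((F ^^ n) x) (- int r) (int r)" for n
  have l1: "length B = 2 * kk + 1" by (simp add: B_def window_def)
  have nr: "nat (2 * int r + 1) = 2*r+1" by arith
  have l2: "\<forall>n\<ge>1. length (v n) = 2 * r + 1" by (simp add: window_def v_def nr)
  have l3: "\<forall>z\<in>X. window z (- int kk) (int kk) = B \<longrightarrow>
        (\<forall>n\<ge>1. window ((F ^^ n) z) (- int r) (int r) = v n)"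
  proof (intro ballI impI allI)
    fix z n assume z: "z \<in> X" "window z (- int kk) (int kk) = B" and n: "1 \<le> (n::nat)"
    have "agree kk x z" using z(2) window_agree unfolding B_def by metis
    then have "agree r ((F^^n) x) ((F^^n) z)" using kk z n by auto
    then show "window ((F ^^ n) z) (- int r) (int r) = v n"
      unfolding v_def using window_agree by metis
  qed
  have l4: "2 * r + 1 \<ge> r" by simp
  have "blocking_word X F B" unfolding blocking_word_def
    using l1 l2 l3 l4 r by blast
  moreover have "x \<in> occ X B kk 0" using xX by (simp add: occ_def B_def sh_def)
  ultimately show ?thesis unfolding B_def by blast
qed


lemma const_int: assumes "\<And>i::int. g (i+1) = g i" shows "g i = g j"
proof (induction i rule: int_induct[where k=j])
  case base then show ?case by simp
next
  case (step1 i) then show ?case using assms by simp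
next
  case (step2 i) then show ?case using assms[of "i-1"] by simp
qed

lemma erg_one: assumes "shift_ergodic X M" "G \<in> sets M" "shift -` G \<inter> X = G" "emeasure M G \<noteq> 0"
  shows "emeasure M G = 1"
  using assms unfolding shift_ergodic_def by blast

lemma dec_const: assumes "finite_measure M" "\<And>n. U n \<in> sets M" "\<And>n. U (Suc n) \<subseteq> U n"
    "\<And>n. measure M (U n) = c"
  shows "measure M (\<Inter>n. U n) = c"
proof -
  have "(\<lambda>n. measure M (U n)) \<longlonglongrightarrow> measure M (\<Inter>n. U n)"
    using assms by (intro finite_measure.finite_Lim_measure_decseq decseq_SucI) auto
  moreover have "(\<lambda>n. measure M (U n)) \<longlonglongrightarrow> c" using assms(4) by simp
  ultimately show ?thesis using LIMSEQ_unique by blast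
qed

lemma recurrence:
  fixes A :: "int \<Rightarrow> (int \<Rightarrow> 'a::finite) set"
  assumes ps: "prob_space M" and sp: "space M = X"
    and erg: "shift_ergodic X M" and ss: "subshift X"
    and As: "\<And>p. A p \<in> sets M" and Ash: "\<And>p. shift -` A p \<inter> X = A (p+1)"
    and pos: "emeasure M (A p0) > 0"
  shows "emeasure M {x\<in>X. \<forall>N::nat. \<exists>p\<ge>int N. x \<in> A p} = 1"
    and "emeasure M {x\<in>X. \<forall>N::nat. \<exists>p\<le>- int N. x \<in> A p} = 1"
    and "{x\<in>X. \<forall>N::nat. \<exists>p\<ge>int N. x \<in> A p} \<in> sets M"
    and "{x\<in>X. \<forall>N::nat. \<exists>p\<le>- int N. x \<in> A p} \<in> sets M"
proof -
  have fm: "finite_measure M" using ps by (simp add: prob_space_def)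
  have AX: "A p \<subseteq> X" for p using sets.sets_into_space[OF As] sp by simp
  have Ap: "shift x \<in> A p \<longleftrightarrow> x \<in> A (p+1)" if "x \<in> X" for x p
    using Ash[of p] that by blast
  have mpos: "measure M (A p0) > 0"
    using pos finite_measure.emeasure_eq_measure[OF fm] by simp
  have inv_meas: "measure M (shift -` S \<inter> X) = measure M S" if "S \<in> sets M" for S
    using erg that unfolding shift_ergodic_def measure_def by simp
  have inv_sets: "shift -` S \<inter> X \<in> sets M" if "S \<in> sets M" for S
    using erg that unfolding shift_ergodic_def by simp
  define U where "U N = (\<Union>n::nat. A (N + int n))" for N
  have Us: "U N \<in> sets M" for N unfolding U_def using As by (intro sets.countable_nat_UN) auto
  have shU: "shift -` U N \<inter> X = U (N+1)" for N
  proof (intro set_eqI iffI)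
    fix x assume "x \<in> shift -` U N \<inter> X"
    then obtain n where "x \<in> X" "shift x \<in> A (N + int n)" by (auto simp: U_def)
    then have "x \<in> A ((N+1) + int n)" using Ap by (simp add: algebra_simps)
    then show "x \<in> U (N+1)" by (auto simp: U_def)
  next
    fix x assume "x \<in> U (N+1)"
    then obtain n where n: "x \<in> A ((N+1) + int n)" by (auto simp: U_def)
    then have xX: "x \<in> X" using AX by blast
    then have "shift x \<in> A (N + int n)" using Ap n by (simp add: algebra_simps)
    then show "x \<in> shift -` U N \<inter> X" using xX by (auto simp: U_def)
  qed
  have Uc: "measure M (U N) = measure M (U p0)" for N
    by (rule const_int) (metis shU inv_meas Us)
  have "A p0 \<subseteq> U p0"
  proof
    fix x assume "x \<in> A p0"
    then have "x \<in> A (p0 + int 0)" by simp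
    then show "x \<in> U p0" unfolding U_def by blast
  qed
  then have Upos: "measure M (U p0) > 0"
    using mpos finite_measure.finite_measure_mono[OF fm _ Us] by (meson less_le_trans)
  define Gp where "Gp = {x\<in>X. \<forall>N::nat. \<exists>p\<ge>int N. x \<in> A p}"
  have Gp_eq: "Gp = (\<Inter>N::nat. U (int N))"
  proof (intro set_eqI iffI)
    fix x assume x: "x \<in> Gp"
    show "x \<in> (\<Inter>N::nat. U (int N))"
    proof
      fix N :: nat
      obtain p where p: "p \<ge> int N" "x \<in> A p" using x unfolding Gp_def by blast
      have "p = int N + int (nat (p - int N))" using p by simp
      then show "x \<in> U (int N)" unfolding U_def using p by (metis UN_iff UNIV_I)
    qed
  next
    fix x assume x: "x \<in> (\<Inter>N::nat. U (int N))"
    then have "x \<in> U 0" by (metis INT_iff UNIV_I of_nat_0)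
    then have "x \<in> X" using AX by (auto simp: U_def)
    moreover have "\<exists>p\<ge>int N. x \<in> A p" for N
    proof -
      obtain n where "x \<in> A (int N + int n)" using x by (auto simp: U_def)
      then show ?thesis by (intro exI[of _ "int N + int n"]) auto
    qed
    ultimately show "x \<in> Gp" by (simp add: Gp_def)
  qed
  have Gps: "Gp \<in> sets M" unfolding Gp_eq using Us by (intro sets.countable_INT) auto
  have "measure M Gp = measure M (U p0)" unfolding Gp_eq
  proof (rule dec_const[OF fm])
    show "\<And>n. U (int n) \<in> sets M" using Us by blast
    show "U (int (Suc n)) \<subseteq> U (int n)" for n
    proof
      fix x assume "x \<in> U (int (Suc n))"
      then obtain m where "x \<in> A (int (Suc n) + int m)" by (auto simp: U_def)
      moreover have "int (Suc n) + int m = int n + int (Suc m)" by simp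
      ultimately show "x \<in> U (int n)" unfolding U_def by (metis UN_iff UNIV_I)
    qed
    show "\<And>n. measure M (U (int n)) = measure M (U p0)" using Uc by blast
  qed
  then have "emeasure M Gp \<noteq> 0"
    using Upos finite_measure.emeasure_eq_measure[OF fm] by simp
  moreover have "shift -` Gp \<inter> X = Gp"
  proof (intro set_eqI iffI)
    fix x assume x: "x \<in> shift -` Gp \<inter> X"
    then have xX: "x \<in> X" by blast
    have "\<exists>p\<ge>int N. x \<in> A p" for N
    proof -
      obtain p where "p \<ge> int N" "shift x \<in> A p" using x unfolding Gp_def by blast
      then show ?thesis using Ap[OF xX] by (intro exI[of _ "p+1"]) auto
    qed
    then show "x \<in> Gp" using xX by (simp add: Gp_def)
  next
    fix x assume x: "x \<in> Gp"
    then have xX: "x \<in> X" by (simp add: Gp_def)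
    have "\<exists>p\<ge>int N. shift x \<in> A p" for N
    proof -
      obtain p where "p \<ge> int (N+1)" "x \<in> A p" using x unfolding Gp_def by blast
      then show ?thesis using Ap[OF xX, of "p-1"] by (intro exI[of _ "p-1"]) auto
    qed
    then show "x \<in> shift -` Gp \<inter> X" using xX subshift_shift[OF ss xX] by (simp add: Gp_def)
  qed
  ultimately have GpE: "emeasure M Gp = 1" by (intro erg_one[OF erg Gps])
  define W where "W N = (\<Union>n::nat. A (N - int n))" for N
  have Ws: "W N \<in> sets M" for N unfolding W_def using As by (intro sets.countable_nat_UN) auto
  have shW: "shift -` W N \<inter> X = W (N+1)" for N
  proof (intro set_eqI iffI)
    fix x assume "x \<in> shift -` W N \<inter> X"
    then obtain n where "x \<in> X" "shift x \<in> A (N - int n)" by (auto simp: W_def)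
    then have "x \<in> A ((N+1) - int n)" using Ap by (simp add: algebra_simps)
    then show "x \<in> W (N+1)" by (auto simp: W_def)
  next
    fix x assume "x \<in> W (N+1)"
    then obtain n where n: "x \<in> A ((N+1) - int n)" by (auto simp: W_def)
    then have xX: "x \<in> X" using AX by blast
    then have "shift x \<in> A (N - int n)" using Ap n by (simp add: algebra_simps)
    then show "x \<in> shift -` W N \<inter> X" using xX by (auto simp: W_def)
  qed
  have Wc: "measure M (W N) = measure M (W p0)" for N
    by (rule const_int) (metis shW inv_meas Ws)
  have "A p0 \<subseteq> W p0"
  proof
    fix x assume "x \<in> A p0"
    then have "x \<in> A (p0 - int 0)" by simp
    then show "x \<in> W p0" unfolding W_def by blast
  qed
  then have Wpos: "measure M (W p0) > 0"
    using mpos finite_measure.finite_measure_mono[OF fm _ Ws] by (meson less_le_trans)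
  define Gm where "Gm = {x\<in>X. \<forall>N::nat. \<exists>p\<le>- int N. x \<in> A p}"
  have Gm_eq: "Gm = (\<Inter>N::nat. W (- int N))"
  proof (intro set_eqI iffI)
    fix x assume x: "x \<in> Gm"
    show "x \<in> (\<Inter>N::nat. W (- int N))"
    proof
      fix N :: nat
      obtain p where p: "p \<le> - int N" "x \<in> A p" using x unfolding Gm_def by blast
      have "p = - int N - int (nat (- int N - p))" using p by simp
      then show "x \<in> W (- int N)" unfolding W_def using p by (metis UN_iff UNIV_I)
    qed
  next
    fix x assume x: "x \<in> (\<Inter>N::nat. W (- int N))"
    then have "x \<in> W 0" by (metis INT_iff UNIV_I of_nat_0 minus_zero)
    then have "x \<in> X" using AX by (auto simp: W_def)
    moreover have "\<exists>p\<le>- int N. x \<in> A p" for N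
    proof -
      obtain n where "x \<in> A (- int N - int n)" using x by (auto simp: W_def)
      then show ?thesis by (intro exI[of _ "- int N - int n"]) auto
    qed
    ultimately show "x \<in> Gm" by (simp add: Gm_def)
  qed
  have Gms: "Gm \<in> sets M" unfolding Gm_eq using Ws by (intro sets.countable_INT) auto
  have "measure M Gm = measure M (W p0)" unfolding Gm_eq
  proof (rule dec_const[OF fm])
    show "\<And>n. W (- int n) \<in> sets M" using Ws by blast
    show "W (- int (Suc n)) \<subseteq> W (- int n)" for n
    proof
      fix x assume "x \<in> W (- int (Suc n))"
      then obtain m where "x \<in> A (- int (Suc n) - int m)" by (auto simp: W_def)
      moreover have "- int (Suc n) - int m = - int n - int (Suc m)" by simp
      ultimately show "x \<in> W (- int n)" unfolding W_def by (metis UN_iff UNIV_I)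
    qed
    show "\<And>n. measure M (W (- int n)) = measure M (W p0)" using Wc by blast
  qed
  then have "emeasure M Gm \<noteq> 0"
    using Wpos finite_measure.emeasure_eq_measure[OF fm] by simp
  moreover have "shift -` Gm \<inter> X = Gm"
  proof (intro set_eqI iffI)
    fix x assume x: "x \<in> shift -` Gm \<inter> X"
    then have xX: "x \<in> X" by blast
    have "\<exists>p\<le>- int N. x \<in> A p" for N
    proof -
      obtain p where "p \<le> - int (N+1)" "shift x \<in> A p" using x unfolding Gm_def by blast
      then show ?thesis using Ap[OF xX] by (intro exI[of _ "p+1"]) auto
    qed
    then show "x \<in> Gm" using xX by (simp add: Gm_def)
  next
    fix x assume x: "x \<in> Gm"
    then have xX: "x \<in> X" by (simp add: Gm_def)
    have "\<exists>p\<le>- int N. shift x \<in> A p" for N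
    proof -
      obtain p where "p \<le> - int N" "x \<in> A p" using x unfolding Gm_def by blast
      then show ?thesis using Ap[OF xX, of "p-1"] by (intro exI[of _ "p-1"]) auto
    qed
    then show "x \<in> shift -` Gm \<inter> X" using xX subshift_shift[OF ss xX] by (simp add: Gm_def)
  qed
  ultimately have GmE: "emeasure M Gm = 1" by (intro erg_one[OF erg Gms])
  show "emeasure M {x\<in>X. \<forall>N::nat. \<exists>p\<ge>int N. x \<in> A p} = 1" using GpE unfolding Gp_def .
  show "emeasure M {x\<in>X. \<forall>N::nat. \<exists>p\<le>- int N. x \<in> A p} = 1" using GmE unfolding Gm_def .
  show "{x\<in>X. \<forall>N::nat. \<exists>p\<ge>int N. x \<in> A p} \<in> sets M" using Gps unfolding Gp_def .
  show "{x\<in>X. \<forall>N::nat. \<exists>p\<le>- int N. x \<in> A p} \<in> sets M" using Gms unfolding Gm_def .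
qed


lemma occ_meas_const: assumes "shift_ergodic X M" "subshift X" "sets M = sets (borel_on X)"
  shows "emeasure M (occ X B k p) = emeasure M (occ X B k q)"
proof (rule const_int[where g="\<lambda>p. emeasure M (occ X B k p)"])
  fix i
  have "occ X B k i \<in> sets M" by (rule open_sets[OF assms(3) occ_open])
  then have "emeasure M (shift -` occ X B k i \<inter> X) = emeasure M (occ X B k i)"
    using assms(1) unfolding shift_ergodic_def by blast
  then show "emeasure M (occ X B k (i + 1)) = emeasure M (occ X B k i)"
    by (simp only: occ_shift_set[OF assms(2)])
qed

theorem mainTheorem3:
  fixes X :: "(int \<Rightarrow> 'a::finite) set"
    and F :: "(int \<Rightarrow> 'a) \<Rightarrow> (int \<Rightarrow> 'a)"
    and M :: "(int \<Rightarrow> 'a) measure"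
  assumes "subshift X"
    and "cellular_automaton X F"
    and "prob_space M"
    and "sets M = sets (borel_on X)"
    and "space M = X"
    and "shift_ergodic X M"
  shows "(\<exists>B. blocking_word X F B \<and> emeasure M (cylinder X B 0) > 0) \<longleftrightarrow>
         ({x. equicontinuity_point X F x} \<in> sets M \<and>
          emeasure M {x. equicontinuity_point X F x} = 1)"
proof -
  note ss = assms(1) and ca = assms(2) and ps = assms(3) and sM = assms(4) and sp = assms(5)
    and erg = assms(6)
  let ?E = "{x. equicontinuity_point X F x}"
  have Es: "?E \<in> sets M" by (rule E_sets[OF sM ca])
  have occs: "occ X B k p \<in> sets M" for B k p by (rule open_sets[OF sM occ_open])
  have fm: "finite_measure M" using ps by (simp add: prob_space_def)
  show ?thesis
  proof
    assume "\<exists>B. blocking_word X F B \<and> emeasure M (cylinder X B 0) > 0"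
    then obtain B where bw: "blocking_word X F B" and mpos: "emeasure M (cylinder X B 0) > 0" by blast
    from bw obtain k r i v where k: "length B = 2*k+1" and r: "is_radius X F r" and ri: "2*i+1 \<ge> r"
      and blk: "\<forall>x\<in>X. window x (- int k) (int k) = B \<longrightarrow> (\<forall>n\<ge>1. window ((F ^^ n) x) (- int i) (int i) = v n)"
      unfolding blocking_word_def by blast
    from r obtain f where rad: "\<forall>x\<in>X. \<forall>j. F x j = f (map (\<lambda>m. x (j + m)) [- int r..int r])"
      unfolding is_radius_def by blast
    have pos: "emeasure M (occ X B k (int k)) > 0" using mpos cyl_occ[OF k] by simp
    note rec = recurrence[OF ps sp erg ss occs occ_shift_set[OF ss] pos]
    let ?Gp = "{x\<in>X. \<forall>N::nat. \<exists>p\<ge>int N. x \<in> occ X B k p}"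
    let ?Gm = "{x\<in>X. \<forall>N::nat. \<exists>p\<le>- int N. x \<in> occ X B k p}"
    have "measure M ?Gp = 1" using rec(1) by (simp add: measure_def)
    then have a1: "AE x in M. x \<in> ?Gp" using prob_space.AE_in_set_eq_1[OF ps rec(3)] by simp
    have "measure M ?Gm = 1" using rec(2) by (simp add: measure_def)
    then have a2: "AE x in M. x \<in> ?Gm" using prob_space.AE_in_set_eq_1[OF ps rec(4)] by simp
    have "AE x in M. x \<in> ?E" using a1 a2
    proof eventually_elim
      case (elim x)
      then show ?case using equi_from_occ[OF ss ca rad ri blk] by blast
    qed
    then have "measure M ?E = 1" using prob_space.AE_in_set_eq_1[OF ps Es] by simp
    then have "emeasure M ?E = 1" using finite_measure.emeasure_eq_measure[OF fm] by simp
    then show "?E \<in> sets M \<and> emeasure M ?E = 1" using Es by simp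
  next
    assume h: "?E \<in> sets M \<and> emeasure M ?E = 1"
    show "\<exists>B. blocking_word X F B \<and> emeasure M (cylinder X B 0) > 0"
    proof (rule ccontr)
      assume nt: "\<not> ?thesis"
      have z: "emeasure M (cylinder X B 0) = 0" if "blocking_word X F B" for B
      proof -
        have "\<not> emeasure M (cylinder X B 0) > 0" using nt that by blast
        then show ?thesis by (simp add: not_gr_zero)
      qed
      define D where "D B = occ X B (length B div 2) 0" for B
      have Dn: "D B \<in> null_sets M" if bB: "blocking_word X F B" for B
      proof -
        obtain k where k: "length B = 2*k+1" using bB unfolding blocking_word_def by blast
        have "length B div 2 = k" using k by simp
        then have "D B = occ X B k 0" unfolding D_def by simp
        moreover have "emeasure M (occ X B k 0) = emeasure M (occ X B k (int k))"
          by (rule occ_meas_const[OF erg ss sM])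
        ultimately have "emeasure M (D B) = emeasure M (occ X B k (int k))" by simp
        also have "\<dots> = 0" using z[OF bB] cyl_occ[OF k] by simp
        finally show ?thesis using occs by (simp add: D_def null_setsI)
      qed
      have U: "(\<Union>B\<in>{B. blocking_word X F B}. D B) \<in> null_sets M"
        by (rule null_sets_UN') (simp add: countableI_type, simp add: Dn)
      have "?E \<subseteq> (\<Union>B\<in>{B. blocking_word X F B}. D B)"
      proof
        fix x assume "x \<in> ?E"
        then have ex: "equicontinuity_point X F x" by simp
        then obtain k where kb: "blocking_word X F (window x (- int k) (int k))"
            and xo: "x \<in> occ X (window x (- int k) (int k)) k 0"
          using equi_to_block[OF ss ca ex] by blast
        have nk: "nat (2 * int k + 1) = 2*k+1" by arith
        have "length (window x (- int k) (int k)) div 2 = k" by (simp add: window_def nk)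
        then have "x \<in> D (window x (- int k) (int k))" using xo by (simp add: D_def)
        then show "x \<in> (\<Union>B\<in>{B. blocking_word X F B}. D B)" using kb by blast
      qed
      then have "?E \<in> null_sets M" by (rule null_sets_subset[OF U Es])
      then have "emeasure M ?E = 0" by (rule null_setsD1)
      then show False using h by simp
    qed
  qed
qed

end
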